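(* Let $k$ be a positive integer, $c\ge 2$ an integer, and $m=k(c^2-1)+1$. Then there exists a single-category instance $I$ with $m$ goods, cardinality constraint $k$, and some number $n$ of agents with $kn\ge m$, such that $$\frac{\text{OPT-USW}(I)}{\max_{\mathcal{A}\in \mathcal{C}_k(I)}\text{USW}(\mathcal{A})}\ge \frac{1}{2}\left(1+\sqrt{1+\frac{m-1}{k}}\right).$$
   Context: A single-category instance consists of $n$ agents and a set $M$ of $m$ indivisible goods; each agent $i$ has an additive utility function $u_i:2^M\to\mathbb{R}_{\ge 0}$ with $u_i(\emptyset)=0$ and $u_i(M)=1$. An allocation is a partition $(A_1,\dots,A_n)$ of $M$, agent $i$ receiving $A_i$. It is cardinal (for constraint $k$) if $|A_i|\le k$ for all $i$; $\mathcal{C}_k(I)$ is the set of cardinal allocations. $\text{USW}(\mathcal{A})=\sum_i u_i(A_i)$ and $\text{OPT-USW}(I)$ is its maximum over all allocations. *)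

theory Defs
  imports Main "HOL-Library.FuncSet" Complex_Main
begin

text \<open>A single-category instance with agents 0..<n and goods 0..<m is given by
  the values u i g of good g for agent i; utilities are additive.\<close>

definition valid_instance :: "nat \<Rightarrow> nat \<Rightarrow> (nat \<Rightarrow> nat \<Rightarrow> real) \<Rightarrow> bool" where
  "valid_instance n m u \<longleftrightarrow>
     (\<forall>i<n. (\<forall>g<m. u i g \<ge> 0) \<and> (\<Sum>g<m. u i g) = 1)"

definition util :: "(nat \<Rightarrow> nat \<Rightarrow> real) \<Rightarrow> nat \<Rightarrow> nat set \<Rightarrow> real" where
  "util u i S = (\<Sum>g\<in>S. u i g)"

text \<open>An allocation (partition of the goods among the agents) is represented by the
  map sending each good to the agent receiving it; agent i gets bundle i.\<close>
definition allocations :: "nat \<Rightarrow> nat \<Rightarrow> (nat \<Rightarrow> nat) set" where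
  "allocations n m = {0..<m} \<rightarrow>\<^sub>E {0..<n}"

definition bundle_of :: "nat \<Rightarrow> (nat \<Rightarrow> nat) \<Rightarrow> nat \<Rightarrow> nat set" where
  "bundle_of m a i = {g\<in>{0..<m}. a g = i}"

definition cardinal_allocations :: "nat \<Rightarrow> nat \<Rightarrow> nat \<Rightarrow> (nat \<Rightarrow> nat) set" where
  "cardinal_allocations n m k = {a \<in> allocations n m. \<forall>i<n. card (bundle_of m a i) \<le> k}"

definition USW :: "nat \<Rightarrow> nat \<Rightarrow> (nat \<Rightarrow> nat \<Rightarrow> real) \<Rightarrow> (nat \<Rightarrow> nat) \<Rightarrow> real" where
  "USW n m u a = (\<Sum>i<n. util u i (bundle_of m a i))"

definition OPT_USW :: "nat \<Rightarrow> nat \<Rightarrow> (nat \<Rightarrow> nat \<Rightarrow> real) \<Rightarrow> real" where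
  "OPT_USW n m u = Max (USW n m u ` allocations n m)"

definition max_cardinal_USW :: "nat \<Rightarrow> nat \<Rightarrow> nat \<Rightarrow> (nat \<Rightarrow> nat \<Rightarrow> real) \<Rightarrow> real" where
  "max_cardinal_USW n m k u = Max (USW n m u ` cardinal_allocations n m k)"

end

theory Submission
  imports Defs
begin

definition uu :: "nat \<Rightarrow> nat \<Rightarrow> nat \<Rightarrow> nat \<Rightarrow> real" where
  "uu s d i g = (if i < d then (if 1 \<le> g \<and> (g-1) div s = i then 1 / real s else 0)
                 else (if g = 0 then 1 else 0))"

lemma block_eq:
  fixes s i d m :: nat
  assumes "s > 0" "i < d" "m = s*d+1"
  shows "{g\<in>{..<m}. 1 \<le> g \<and> (g-1) div s = i} = (\<lambda>x. x+1) ` {i*s..<i*s+s}"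
proof (intro set_eqI iffI)
  fix g assume g: "g \<in> {g\<in>{..<m}. 1 \<le> g \<and> (g-1) div s = i}"
  then have e: "g - 1 = i*s + (g-1) mod s" using div_mult_mod_eq[of "g-1" s] by simp
  have "(g-1) mod s < s" using assms by simp
  then have "i*s \<le> g-1" "g-1 < i*s+s" using e by linarith+
  then have "g - 1 \<in> {i*s..<i*s+s}" by simp
  moreover have eq: "g = (g-1)+1" using g by auto
  ultimately show "g \<in> (\<lambda>x. x+1) ` {i*s..<i*s+s}" by (intro image_eqI[where f="\<lambda>x. x+1" and x="g-1", OF eq])
next
  fix g assume "g \<in> (\<lambda>x. x+1) ` {i*s..<i*s+s}"
  then obtain x where x0: "x \<in> {i*s..<i*s+s}" "g = x+1" by blast
  then have x: "g = x+1" "i*s \<le> x" "x < i*s+s" by auto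
  have "x div s = i" using x by (intro div_nat_eqI) (auto simp: mult.commute)
  moreover have "x < s*d" using x assms
  proof -
    have "i*s+s \<le> d*s" using assms(2)
      by (metis add.commute mult.commute mult_Suc_right Suc_leI mult_le_mono1)
    then show ?thesis using x by (simp add: mult.commute)
  qed
  ultimately show "g \<in> {g\<in>{..<m}. 1 \<le> g \<and> (g-1) div s = i}" using x assms by auto
qed

lemma block_card:
  assumes "s > 0" "i < d" "m = s*d+1"
  shows "card {g\<in>{..<m}. 1 \<le> g \<and> (g-1) div s = i} = s"
  using block_eq[OF assms] by (simp add: card_image)

lemma block_sum:
  assumes "s > 0" "i < d" "m = s*d+1"
  shows "(\<Sum>g<m. uu s d i g) = 1"
proof -
  have "(\<Sum>g<m. uu s d i g) = (\<Sum>g\<in>{g\<in>{..<m}. 1 \<le> g \<and> (g-1) div s = i}. 1 / real s)"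
    using assms by (subst sum.inter_filter) (auto simp: uu_def)
  also have "\<dots> = 1" using block_card[OF assms] assms by simp
  finally show ?thesis .
qed

lemma valid:
  assumes "s > 0" "m = s*d+1"
  shows "valid_instance n m (uu s d)"
  unfolding valid_instance_def
proof (intro allI impI conjI)
  fix i g assume "i < n" "g < m" then show "uu s d i g \<ge> 0" by (simp add: uu_def)
next
  fix i assume "i < n"
  show "(\<Sum>g<m. uu s d i g) = 1"
  proof (cases "i < d")
    case True then show ?thesis using block_sum assms by blast
  next
    case False
    then have "(\<Sum>g<m. uu s d i g) = (\<Sum>g<m. if g = 0 then 1 else 0)"
      by (simp add: uu_def)
    also have "\<dots> = 1" using assms by (subst sum.delta) auto
    finally show ?thesis .
  qed
qed

lemma card_upper:
  assumes "s > 0" "m = s*d+1" "d \<le> n" "a \<in> cardinal_allocations n m k"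
  shows "USW n m (uu s d) a \<le> real d * real k / real s + 1"
proof -
  have cardb: "\<And>i. i < n \<Longrightarrow> card (bundle_of m a i) \<le> k"
    using assms(4) by (auto simp: cardinal_allocations_def)
  have split: "{..<n} = {..<d} \<union> {d..<n}" using assms(3) by auto
  have "USW n m (uu s d) a = (\<Sum>i<d. util (uu s d) i (bundle_of m a i))
        + (\<Sum>i\<in>{d..<n}. util (uu s d) i (bundle_of m a i))"
    unfolding USW_def split by (subst sum.union_disjoint) auto
  moreover have "(\<Sum>i<d. util (uu s d) i (bundle_of m a i)) \<le> (\<Sum>i<d. real k / real s)"
  proof (rule sum_mono)
    fix i assume i: "i \<in> {..<d}"
    have "util (uu s d) i (bundle_of m a i) \<le> (\<Sum>g\<in>bundle_of m a i. 1 / real s)"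
      unfolding util_def by (rule sum_mono) (use i in \<open>auto simp: uu_def\<close>)
    also have "\<dots> = real (card (bundle_of m a i)) / real s" by simp
    also have "\<dots> \<le> real k / real s"
      using cardb[of i] i assms(3) by (intro divide_right_mono) auto
    finally show "util (uu s d) i (bundle_of m a i) \<le> real k / real s" .
  qed
  moreover have "(\<Sum>i\<in>{d..<n}. util (uu s d) i (bundle_of m a i)) \<le> 1"
  proof -
    have "\<And>i. i \<in> {d..<n} \<Longrightarrow> util (uu s d) i (bundle_of m a i) = (if i = a 0 then 1 else 0)"
    proof -
      fix i assume i: "i \<in> {d..<n}"
      have "util (uu s d) i (bundle_of m a i) = (\<Sum>g\<in>bundle_of m a i. if g = 0 then 1 else 0)"
        unfolding util_def using i by (intro sum.cong) (auto simp: uu_def)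
      also have "\<dots> = (if 0 \<in> bundle_of m a i then 1 else 0)"
        by (subst sum.delta) (auto simp: bundle_of_def)
      also have "\<dots> = (if i = a 0 then 1 else 0)" using assms(2) by (auto simp: bundle_of_def)
      finally show "util (uu s d) i (bundle_of m a i) = (if i = a 0 then 1 else 0)" .
    qed
    then have "(\<Sum>i\<in>{d..<n}. util (uu s d) i (bundle_of m a i)) = (\<Sum>i\<in>{d..<n}. if i = a 0 then 1 else 0)"
      by (rule sum.cong[OF refl])
    also have "\<dots> \<le> 1" by (subst sum.delta) auto
    finally show ?thesis .
  qed
  ultimately show ?thesis by simp
qed

theorem lemma1:
  fixes k c m :: nat
  assumes "k \<ge> 1" and "c \<ge> 2" and "m = k * (c^2 - 1) + 1"
  shows "\<exists>n u. valid_instance n m u \<and> k * n \<ge> m \<and>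
           OPT_USW n m u / max_cardinal_USW n m k u
             \<ge> (1 / 2) * (1 + sqrt (1 + real (m - 1) / real k))"
proof -
  define s where "s = k * (c+1)"
  define d where "d = c - 1"
  define n where "n = d + m"
  define u where "u = uu s d"
  have s0: "s > 0" using assms by (simp add: s_def)
  have "c^2 - 1 = (c+1)*(c-1)" by (simp add: power2_eq_square algebra_simps)
  then have m: "m = s*d+1" using assms(3) unfolding s_def d_def by (simp only: mult.assoc)
  have val: "valid_instance n m u" unfolding u_def using valid[OF s0 m] .
  have kn: "k * n \<ge> m" using assms(1) unfolding n_def
    by (metis le_add2 mult_1 mult_le_mono1 order_trans)
  have fin: "finite (allocations n m)" unfolding allocations_def by (simp add: finite_PiE)
  have finc: "finite (cardinal_allocations n m k)"
    by (rule finite_subset[OF _ fin]) (auto simp: cardinal_allocations_def)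
  have nonneg: "\<And>a i. 0 \<le> util u i (bundle_of m a i)"
    unfolding util_def u_def uu_def by (intro sum_nonneg) auto
  define a0 where "a0 = (\<lambda>g. if g < m then d + g else undefined)"
  have a0b: "\<And>i. bundle_of m a0 i \<subseteq> {i - d}"
    by (auto simp: bundle_of_def a0_def)
  have a0c: "a0 \<in> cardinal_allocations n m k"
    unfolding cardinal_allocations_def allocations_def
  proof (intro CollectI conjI allI impI)
    show "a0 \<in> {0..<m} \<rightarrow>\<^sub>E {0..<n}" by (auto simp: a0_def n_def)
    fix i assume "i < n"
    have "card (bundle_of m a0 i) \<le> card {i - d}" by (rule card_mono[OF _ a0b]) auto
    then show "card (bundle_of m a0 i) \<le> k" using assms(1) by simp
  qed
  have "bundle_of m a0 d = {0}" using m by (auto simp: bundle_of_def a0_def)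
  then have "util u d (bundle_of m a0 d) = 1" by (simp add: util_def u_def uu_def)
  moreover have "util u d (bundle_of m a0 d) \<le> USW n m u a0"
    unfolding USW_def by (rule member_le_sum) (use nonneg m in \<open>auto simp: n_def\<close>)
  ultimately have "1 \<le> USW n m u a0" by simp
  also have "\<dots> \<le> max_cardinal_USW n m k u"
    unfolding max_cardinal_USW_def by (rule Max_ge) (use finc a0c in auto)
  finally have low: "1 \<le> max_cardinal_USW n m k u" .
  have up: "max_cardinal_USW n m k u \<le> real d * real k / real s + 1"
    unfolding max_cardinal_USW_def
    using finc a0c card_upper[OF s0 m, of n] by (subst Max_le_iff) (auto simp: n_def u_def)
  define a1 where "a1 = (\<lambda>g. if g < m then (if g = 0 then d else (g-1) div s) else undefined)"
  have a1a: "a1 \<in> allocations n m"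
    unfolding allocations_def
  proof
    fix g assume g: "g \<in> {0..<m}"
    show "a1 g \<in> {0..<n}"
    proof (cases "g = 0")
      case True then show ?thesis using g by (auto simp: a1_def n_def)
    next
      case False
      have "g - 1 < s*d" using g m False by auto
      then have "(g - 1) div s < d" using s0
        by (simp add: div_less_iff_less_mult mult.commute)
      then show ?thesis using g by (auto simp: a1_def n_def)
    qed
  qed (auto simp: a1_def)
  have ub: "util u i (bundle_of m a1 i) = 1" if i: "i < d" for i
  proof -
    have "bundle_of m a1 i = {g\<in>{..<m}. 1 \<le> g \<and> (g-1) div s = i}"
      using i by (auto simp: bundle_of_def a1_def)
    then have "util u i (bundle_of m a1 i) = (\<Sum>g\<in>{g\<in>{..<m}. 1 \<le> g \<and> (g-1) div s = i}. 1 / real s)"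
      unfolding util_def u_def uu_def using i by (intro sum.cong) auto
    also have "\<dots> = 1" using block_card[OF s0 i m] s0 by simp
    finally show ?thesis .
  qed
  have "bundle_of m a1 d = {0}"
  proof (intro set_eqI iffI)
    fix g assume g: "g \<in> bundle_of m a1 d"
    show "g \<in> {0}"
    proof (rule ccontr)
      assume "g \<notin> {0}"
      then have "g - 1 < s*d" using g m by (auto simp: bundle_of_def)
      then have "(g - 1) div s < d" using s0
        by (simp add: div_less_iff_less_mult mult.commute)
      then show False using g \<open>g \<notin> {0}\<close> by (auto simp: bundle_of_def a1_def)
    qed
  qed (use m in \<open>auto simp: bundle_of_def a1_def\<close>)
  then have ud: "util u d (bundle_of m a1 d) = 1" by (simp add: util_def u_def uu_def)
  have "(\<Sum>i<d. util u i (bundle_of m a1 i)) = (\<Sum>i<d. 1)"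
    using ub by (intro sum.cong) auto
  then have "(\<Sum>i<Suc d. util u i (bundle_of m a1 i)) = real d + 1"
    using ud by simp
  moreover have "c = d + 1" using assms(2) by (simp add: d_def)
  then have "real c = real d + 1" by simp
  ultimately have "real c = (\<Sum>i<Suc d. util u i (bundle_of m a1 i))" by simp
  also have "\<dots> \<le> USW n m u a1"
    unfolding USW_def by (rule sum_mono2) (use nonneg m in \<open>auto simp: n_def\<close>)
  also have "\<dots> \<le> OPT_USW n m u"
    unfolding OPT_USW_def by (rule Max_ge) (use fin a1a in auto)
  finally have opt: "real c \<le> OPT_USW n m u" .
  have rd: "real d = real c - 1" using \<open>c = d + 1\<close> by simp
  have rs: "real s = real k * (real c + 1)" by (simp add: s_def algebra_simps)
  have dks: "real d * real k / real s = (real c - 1) / (real c + 1)"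
  proof -
    have kp: "real k > 0" using assms(1) by simp
    have "real d * real k / real s = real k * (real c - 1) / (real k * (real c + 1))"
      unfolding rd rs by (simp add: mult.commute)
    also have "\<dots> = (real c - 1) / (real c + 1)" using kp by simp
    finally show ?thesis .
  qed
  have sq: "sqrt (1 + real (m - 1) / real k) = real c"
  proof -
    have "m - 1 = k * (c^2 - 1)" using assms(3) by simp
    moreover have "c^2 \<ge> 1" using assms(2) by simp
    ultimately have "real (m - 1) = real k * (real c ^ 2 - 1)"
      by (simp only: of_nat_mult of_nat_diff[OF \<open>c^2 \<ge> 1\<close>] of_nat_power of_nat_1)
    then have "real (m - 1) / real k = real c ^ 2 - 1"
      using assms(1) by simp
    then have "1 + real (m - 1) / real k = real c ^ 2" by simp
    then show ?thesis by simp
  qed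
  define M where "M = max_cardinal_USW n m k u"
  have M1: "1 \<le> M" using low by (simp add: M_def)
  have Mu: "M \<le> (real c - 1) / (real c + 1) + 1" using up dks by (simp add: M_def)
  have c2: "real c \<ge> 2" using assms(2) by simp
  have e1: "(real c - 1) / (real c + 1) + 1 = 2 * real c / (real c + 1)"
    using c2 by (simp add: field_simps)
  have e2: "real c / (2 * real c / (real c + 1)) = (1/2) * (1 + real c)"
    using c2 by (simp add: field_simps)
  have "(1/2) * (1 + real c) = real c / (2 * real c / (real c + 1))" using e2 by simp
  also have "real c / (2 * real c / (real c + 1)) \<le> real c / M"
  proof (rule divide_left_mono)
    show "M \<le> 2 * real c / (real c + 1)" using Mu e1 by simp
    show "0 \<le> real c" by simp
    show "0 < 2 * real c / (real c + 1) * M" using c2 M1 by simp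
  qed
  also have "real c / M \<le> OPT_USW n m u / M"
    using opt M1 by (intro divide_right_mono) auto
  finally have "(1/2) * (1 + real c) \<le> OPT_USW n m u / M" .
  then show ?thesis using val kn sq unfolding M_def
    by (intro exI[of _ n] exI[of _ u]) simp
qed

end
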